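(* Let $R\in\mathbb R$ and let $f:[0,R)\to\mathbb R$ be continuously differentiable and satisfy (h1) $f(0)>0$, $f'(0)=-1$; (h2) $f'$ is strictly increasing and convex; (h3) $f(t)<0$ for some $t\in(0,R)$. Let $\kappa:=\sup_{0<t<R}\frac{-f(t)}{t}$, $\lambda:=\sup\{t\in[0,R):\kappa+f'(t)<0\}$, $\Theta:=\kappa/(2-\kappa)$, and \[\Omega:=\{(t,\varepsilon)\in\mathbb R^2:0\le t<\lambda,\ 0\le\varepsilon\le\kappa t,\ 0<f(t)+\varepsilon\}.\] If $0\le\theta\le\Theta$, $(t,\varepsilon)\in\Omega$, and \[t_+=t-(1+\theta)\frac{f(t)+\varepsilon}{f'(t)},\qquad \varepsilon_+=\varepsilon+2\theta(f(t)+\varepsilon),\] then $(t_+,\varepsilon_+)\in\Omega$, $t<t_+$, $\varepsilon\le\varepsilon_+$, and \[f(t_+)+\varepsilon_+<\Big(\frac{1+\theta^2}{2}\Big)(f(t)+\varepsilon).\] *)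

theory Defs
  imports "HOL-Analysis.Analysis"
begin

definition kappa :: "(real \<Rightarrow> real) \<Rightarrow> real \<Rightarrow> real" where
  "kappa f R = (SUP t\<in>{0<..<R}. - f t / t)"

definition lam :: "(real \<Rightarrow> real) \<Rightarrow> (real \<Rightarrow> real) \<Rightarrow> real \<Rightarrow> real" where
  "lam f f' R = Sup {t \<in> {0..<R}. kappa f R + f' t < 0}"

definition Theta :: "(real \<Rightarrow> real) \<Rightarrow> real \<Rightarrow> real" where
  "Theta f R = kappa f R / (2 - kappa f R)"

definition Omega :: "(real \<Rightarrow> real) \<Rightarrow> (real \<Rightarrow> real) \<Rightarrow> real \<Rightarrow> (real \<times> real) set" where
  "Omega f f' R = {(t, e). 0 \<le> t \<and> t < lam f f' R \<and> 0 \<le> e \<and> e \<le> kappa f R * t \<and> 0 < f t + e}"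

end

theory Submission
  imports Defs
begin

lemma mvt_dom:
  fixes g g' :: "real \<Rightarrow> real"
  assumes d: "\<And>x. x \<in> {0..<R} \<Longrightarrow> (g has_real_derivative g' x) (at x within {0..<R})"
    and "0 \<le> u" "u < v" "v < R"
  shows "\<exists>\<xi>. u < \<xi> \<and> \<xi> < v \<and> g v - g u = g' \<xi> * (v - u)"
proof -
  have "\<exists>x\<in>{u<..<v}. g v - g u = (\<lambda>h. h * g' x) (v - u)"
  proof (rule mvt_simple[OF assms(3)])
    fix x assume "u \<le> x" "x \<le> v"
    hence "x \<in> {0..<R}" using assms by auto
    hence "(g has_real_derivative g' x) (at x within {u..v})"
      using DERIV_subset[OF d[OF \<open>x \<in> {0..<R}\<close>], of "{u..v}"] assms by (metis atLeastAtMost_subseteq_atLeastLessThan_iff)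
    thus "(g has_derivative (\<lambda>h. h * g' x)) (at x within {u..v})"
      unfolding has_field_derivative_def by (metis (no_types, lifting) ext mult.commute)
  qed
  thus ?thesis by (auto simp: mult.commute)
qed

lemma tangent_dom:
  fixes f f' :: "real \<Rightarrow> real"
  assumes d: "\<And>x. x \<in> {0..<R} \<Longrightarrow> (f has_real_derivative f' x) (at x within {0..<R})"
    and m: "strict_mono_on {0..<R} f'"
    and u: "u \<in> {0..<R}" and v: "v \<in> {0..<R}" and ne: "u \<noteq> v"
  shows "f u > f v + f' v * (u - v)"
proof (cases "u < v")
  case True
  then obtain \<xi> where \<xi>: "u < \<xi>" "\<xi> < v" "f v - f u = f' \<xi> * (v - u)"
    using mvt_dom[OF d, of u v] u v by auto
  have "f' \<xi> < f' v" using m \<xi> u v by (auto intro!: strict_mono_onD[OF m])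
  hence "f' \<xi> * (v - u) < f' v * (v - u)" using True by simp
  thus ?thesis using \<xi> by (simp add: algebra_simps)
next
  case False
  hence "v < u" using ne by simp
  then obtain \<xi> where \<xi>: "v < \<xi>" "\<xi> < u" "f u - f v = f' \<xi> * (u - v)"
    using mvt_dom[OF d, of v u] u v by auto
  have "f' v < f' \<xi>" using m \<xi> u v by (auto intro!: strict_mono_onD[OF m])
  hence "f' v * (u - v) < f' \<xi> * (u - v)" using \<open>v < u\<close> by simp
  thus ?thesis using \<xi> by (simp add: algebra_simps)
qed

lemma tangent_dom_le:
  fixes f f' :: "real \<Rightarrow> real"
  assumes d: "\<And>x. x \<in> {0..<R} \<Longrightarrow> (f has_real_derivative f' x) (at x within {0..<R})"
    and m: "strict_mono_on {0..<R} f'"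
    and u: "u \<in> {0..<R}" and v: "v \<in> {0..<R}"
  shows "f u \<ge> f v + f' v * (u - v)"
  using tangent_dom[OF d m u v] by (cases "u = v") auto


theorem lemma4p2:
  fixes f f' :: "real \<Rightarrow> real" and R \<theta> t \<epsilon> :: real
  assumes deriv: "\<And>x. x \<in> {0..<R} \<Longrightarrow> (f has_real_derivative f' x) (at x within {0..<R})"
    and cont: "continuous_on {0..<R} f'"
    and h1: "f 0 > 0" "f' 0 = -1"
    and h2: "strict_mono_on {0..<R} f'" "convex_on {0..<R} f'"
    and h3: "\<exists>s\<in>{0<..<R}. f s < 0"
    and theta: "0 \<le> \<theta>" "\<theta> \<le> Theta f R"
    and inO: "(t, \<epsilon>) \<in> Omega f f' R"
  shows "(t - (1 + \<theta>) * (f t + \<epsilon>) / f' t, \<epsilon> + 2 * \<theta> * (f t + \<epsilon>)) \<in> Omega f f' R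
       \<and> t < t - (1 + \<theta>) * (f t + \<epsilon>) / f' t
       \<and> \<epsilon> \<le> \<epsilon> + 2 * \<theta> * (f t + \<epsilon>)
       \<and> f (t - (1 + \<theta>) * (f t + \<epsilon>) / f' t) + (\<epsilon> + 2 * \<theta> * (f t + \<epsilon>))
           < ((1 + \<theta>^2) / 2) * (f t + \<epsilon>)"
proof -
  note tg = tangent_dom[OF deriv h2(1)]
  note tgl = tangent_dom_le[OF deriv h2(1)]
  obtain s0 where s0: "0 < s0" "s0 < R" "f s0 < 0" using h3 by auto
  have R0: "R > 0" using s0 by simp
  define K where "K = kappa f R"
  have Kdef: "K = (SUP u\<in>{0<..<R}. - f u / u)" unfolding K_def kappa_def ..
  have below1: "- f u / u \<le> 1 - f 0 / R" if "u \<in> {0<..<R}" for u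
  proof -
    have "f u > f 0 + f' 0 * (u - 0)" using tg[of u 0] that R0 by auto
    hence "- f u < u - f 0" using h1 by simp
    hence "- f u / u < (u - f 0) / u" using that divide_strict_right_mono[of "- f u" "u - f 0" u] by simp
    also have "\<dots> = 1 - f 0 / u" using that by (simp add: field_simps)
    also have "\<dots> \<le> 1 - f 0 / R" using that h1 by (simp add: frac_le)
    finally show ?thesis by simp
  qed
  have bdd: "bdd_above ((\<lambda>u. - f u / u) ` {0<..<R})"
    using below1 by (intro bdd_aboveI2) auto
  have Kup: "- f u / u \<le> K" if "u \<in> {0<..<R}" for u
    unfolding Kdef using bdd that by (rule cSUP_upper2) auto
  have hpos: "f u + K * u \<ge> 0" if "u \<in> {0..<R}" for u
  proof (cases "u = 0")
    case True thus ?thesis using h1 by simp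
  next
    case False
    hence "u > 0" using that by simp
    hence "- f u / u \<le> K" using Kup that by simp
    hence "-K * u \<le> f u / u * u" using \<open>u > 0\<close> by (intro mult_right_mono) auto
    thus ?thesis using \<open>u > 0\<close> by simp
  qed
  have K1: "K \<le> 1 - f 0 / R" unfolding Kdef using below1 R0 by (intro cSUP_least) auto
  have "f 0 / R > 0" using h1 R0 by simp
  hence Klt1: "K < 1" using K1 by linarith
  have "- f s0 / s0 > 0" using s0 by (simp add: divide_neg_pos)
  hence Kpos: "K > 0" using Kup[of s0] s0 by simp
  define S where "S = {u \<in> {0..<R}. K + f' u < 0}"
  define lam' where "lam' = lam f f' R"
  have lamdef: "lam' = Sup S" unfolding lam'_def lam_def S_def K_def ..
  have S0: "0 \<in> S" unfolding S_def using R0 h1 Klt1 by simp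
  have bddS: "bdd_above S" unfolding S_def by (intro bdd_aboveI[of _ R]) auto
  have lamR: "lam' \<le> R" unfolding lamdef using S0 by (intro cSup_least) (auto simp: S_def)
  have inS: "K + f' u < 0" if "0 \<le> u" "u < lam'" for u
  proof -
    obtain v where v: "v \<in> S" "u < v" using less_cSupD[of S u] S0 \<open>u < lam'\<close> lamdef by blast
    have "f' u < f' v" using v that by (intro strict_mono_onD[OF h2(1)]) (auto simp: S_def)
    thus ?thesis using v by (auto simp: S_def)
  qed
  have notS: "K + f' u \<ge> 0" if "u < R" "lam' < u" for u
  proof (rule ccontr)
    assume "\<not> ?thesis"
    moreover have "0 \<le> u" using that lamdef cSup_upper[OF S0 bddS] by simp
    ultimately have "u \<in> S" using that by (auto simp: S_def)
    thus False using cSup_upper[OF _ bddS] that lamdef by force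
  qed
  have Th: "Theta f R = K / (2 - K)" unfolding Theta_def K_def ..
  have th2: "\<theta> * (2 - K) \<le> K" using theta Th Klt1 by (simp add: le_divide_eq)
  from inO have t0: "0 \<le> t" and tl: "t < lam'" and e0: "0 \<le> \<epsilon>" and eK: "\<epsilon> \<le> K * t"
    and gpos: "0 < f t + \<epsilon>"
    unfolding Omega_def lam'_def K_def by auto
  have tR: "t < R" using tl lamR by simp
  define g where "g = f t + \<epsilon>"
  define d where "d = f' t"
  define a where "a = - d - K"
  define H where "H = f t + K * t"
  have dK: "d < - K" using inS[OF t0 tl] d_def by simp
  have dm1: "d \<ge> -1"
  proof (cases "t = 0")
    case True thus ?thesis using h1 d_def by simp
  next
    case False
    hence "f' 0 < f' t" using t0 tR R0 by (intro strict_mono_onD[OF h2(1)]) auto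
    thus ?thesis using h1 d_def by simp
  qed
  have apos: "a > 0" and a1: "a \<le> 1 - K" using dK dm1 a_def by auto
  have gH: "g \<le> H" "g > 0" using eK gpos g_def H_def by auto
  define L where "L = t + H / a"
  have LH: "a * (L - t) = H" using apos L_def by simp
  have Ll: "L < lam'"
  proof (rule ccontr)
    assume "\<not> L < lam'"
    hence lL: "lam' \<le> L" by simp
    define p where "p = (t + lam') / 2"
    have p: "t < p" "p < lam'" using tl p_def by auto
    have pR: "p < R" using p lamR by simp
    have hp: "f' p + K < 0" using inS[of p] p t0 by simp
    have dp: "d < f' p" unfolding d_def using p t0 pR by (intro strict_mono_onD[OF h2(1)]) auto
    define c where "c = H + (d + K) * (p - t) + (f' p + K) * (lam' - p)"
    have "H + (d + K) * (lam' - t) \<ge> 0"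
    proof -
      have "(d + K) * (lam' - t) \<ge> (d + K) * (L - t)" using lL dK by (intro mult_left_mono_neg) auto
      thus ?thesis using LH a_def by (simp add: algebra_simps)
    qed
    moreover have "c - (H + (d + K) * (lam' - t)) = (f' p - d) * (lam' - p)"
      unfolding c_def by (simp add: algebra_simps)
    moreover have "(f' p - d) * (lam' - p) > 0" using dp p by simp
    ultimately have cpos: "c > 0" by linarith
    have low1: "f u + K * u \<ge> c" if "u \<in> {0..<R}" "u \<le> lam'" for u
    proof (cases "u \<le> p")
      case True
      have "f u \<ge> f t + d * (u - t)" using tgl[of u t] that t0 tR d_def by auto
      moreover have "(d + K) * (u - t) \<ge> (d + K) * (p - t)" using True dK by (intro mult_left_mono_neg) auto
      moreover have "(f' p + K) * (lam' - p) \<le> 0" using hp p by (simp add: mult_nonpos_nonneg)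
      ultimately show ?thesis unfolding c_def H_def by (simp add: algebra_simps)
    next
      case False
      have "f u \<ge> f p + f' p * (u - p)" using tgl[of u p] that p t0 pR by auto
      moreover have "f p \<ge> f t + d * (p - t)" using tgl[of p t] p t0 tR pR d_def by auto
      moreover have "(f' p + K) * (u - p) \<ge> (f' p + K) * (lam' - p)" using that hp by (intro mult_left_mono_neg) auto
      ultimately show ?thesis unfolding c_def H_def by (simp add: algebra_simps)
    qed
    have low: "f u + K * u \<ge> c" if uR: "u \<in> {0..<R}" for u
    proof (cases "u \<le> lam'")
      case True thus ?thesis using low1 that by simp
    next
      case False
      have l0: "0 \<le> lam'" using p t0 by simp
      obtain \<xi> where \<xi>: "lam' < \<xi>" "\<xi> < u" "f u - f lam' = f' \<xi> * (u - lam')"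
        using mvt_dom[OF deriv l0, of u] False uR by auto
      have "K + f' \<xi> \<ge> 0" using notS[of \<xi>] \<xi> uR by simp
      hence "(f' \<xi> + K) * (u - lam') \<ge> 0" using \<xi> by simp
      moreover have "f lam' + K * lam' \<ge> c" using low1[of lam'] l0 p pR False uR by simp
      ultimately show ?thesis using \<xi> by (simp add: algebra_simps)
    qed
    have "- f u / u \<le> K - c / R" if "u \<in> {0<..<R}" for u
    proof -
      have u: "u > 0" "u < R" using that by auto
      have "c / R \<le> c / u" using u cpos by (simp add: frac_le)
      also have "c / u \<le> (f u + K * u) / u" using low[of u] u by (simp add: divide_right_mono)
      also have "\<dots> = f u / u + K" using u by (simp add: field_simps)
      finally show ?thesis by simp
    qed
    hence "K \<le> K - c / R" unfolding Kdef using R0 by (intro cSUP_least) auto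
    moreover have "c / R > 0" using cpos R0 by simp
    ultimately show False by simp
  qed
  have aK: "0 < a + K" "a + K \<le> 1" using apos Kpos dm1 a_def by auto
  define T where "T = t - (1 + \<theta>) * (f t + \<epsilon>) / f' t"
  define \<sigma> where "\<sigma> = (1 + \<theta>) * g / (a + K)"
  have Ts: "T = t + \<sigma>" unfolding T_def \<sigma>_def g_def a_def d_def
    by (simp add: field_simps)
  have dsig: "d * \<sigma> = - (1 + \<theta>) * g" unfolding \<sigma>_def using aK a_def by (simp add: field_simps)
  have spos: "\<sigma> > 0" unfolding \<sigma>_def using aK gH theta by simp
  have thlt1: "\<theta> < 1" using th2 Klt1 theta by (smt (verit) mult_le_cancel_left1)
  have tha: "\<theta> * a < K"
  proof -
    have "\<theta> * a \<le> \<theta> * (1 - K)" using theta a1 by (simp add: mult_left_mono)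
    also have "\<dots> = \<theta> * (2 - K) - \<theta>" by (simp add: algebra_simps)
    finally show ?thesis using th2 Kpos theta by (cases "\<theta> = 0") auto
  qed
  have "(1 + \<theta>) * g * a < H * (a + K)"
  proof -
    have "(1 + \<theta>) * g * a = g * a + (\<theta> * a) * g" by (simp add: algebra_simps)
    also have "\<dots> < g * a + K * g" using tha gH by simp
    also have "\<dots> \<le> H * a + K * H" using gH apos Kpos by (intro add_mono mult_right_mono mult_left_mono) auto
    finally show ?thesis by (simp add: algebra_simps)
  qed
  hence sL: "\<sigma> < H / a" unfolding \<sigma>_def using aK apos by (simp add: field_simps)
  have TL: "T < L" using sL Ts L_def by simp
  have Tl: "T < lam'" using TL Ll by simp
  have TR: "T < R" using Tl lamR by simp
  have tT: "t < T" using Ts spos by simp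
  have T0: "0 \<le> T" using tT t0 by simp
  have e2: "\<epsilon> \<le> \<epsilon> + 2 * \<theta> * g" using theta gH by simp
  have eT: "\<epsilon> + 2 * \<theta> * g \<le> K * T"
  proof -
    have "(1 + \<theta>) * g \<le> \<sigma>" unfolding \<sigma>_def using aK gH theta by (simp add: le_divide_eq mult_left_le)
    hence "K * ((1 + \<theta>) * g) \<le> K * \<sigma>" using Kpos by simp
    moreover have "2 * \<theta> * g \<le> K * ((1 + \<theta>) * g)"
    proof -
      have "(\<theta> * (2 - K)) * g \<le> K * g" using th2 gH by (simp add: mult_right_mono)
      thus ?thesis by (simp add: algebra_simps)
    qed
    ultimately show ?thesis using eK Ts by (simp add: algebra_simps)
  qed
  have fT: "f T > f t + d * \<sigma>" using tg[of T t] T0 TR t0 tR tT Ts d_def by auto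
  have pos: "f T + (\<epsilon> + 2 * \<theta> * g) > 0"
  proof -
    have "f T + (\<epsilon> + 2 * \<theta> * g) > f t + d * \<sigma> + \<epsilon> + 2 * \<theta> * g" using fT by simp
    also have "f t + d * \<sigma> + \<epsilon> + 2 * \<theta> * g = \<theta> * g" using dsig g_def by (simp add: algebra_simps)
    finally show ?thesis using theta gH by (smt (verit) mult_nonneg_nonneg)
  qed
  define m where "m = (f' L - d) / (L - t)"
  have tLpos: "L - t > 0" using L_def gH apos by simp
  have L0R: "L \<in> {0..<R}" using Ll lamR t0 tLpos by auto
  have chord: "f' u \<le> d + m * (u - t)" if "t \<le> u" "u \<le> L" for u
  proof -
    define \<mu> where "\<mu> = (u - t) / (L - t)"
    have mu: "0 \<le> \<mu>" "\<mu> \<le> 1" unfolding \<mu>_def using that tLpos by auto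
    have mL: "\<mu> * (L - t) = u - t" unfolding \<mu>_def using tLpos by simp
    have "(1 - \<mu>) *\<^sub>R t + \<mu> *\<^sub>R L = u" using mL by (simp add: algebra_simps)
    moreover have "f' ((1 - \<mu>) *\<^sub>R t + \<mu> *\<^sub>R L) \<le> (1 - \<mu>) * f' t + \<mu> * f' L"
      using convex_onD[OF h2(2) mu] t0 tR L0R by auto
    ultimately have "f' u \<le> (1 - \<mu>) * d + \<mu> * f' L" using d_def by simp
    also have "\<dots> = d + \<mu> * (f' L - d)" by (simp add: algebra_simps)
    also have "\<mu> * (f' L - d) = m * (u - t)" unfolding \<mu>_def m_def by simp
    finally show ?thesis by simp
  qed
  define \<phi> where "\<phi> = (\<lambda>u. f u - f t - d * (u - t) - m * (u - t)^2 / 2)"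
  have dphi: "(\<phi> has_real_derivative (f' u - d - m * (u - t))) (at u within {0..<R})"
    if "u \<in> {0..<R}" for u
    unfolding \<phi>_def using deriv[OF that]
    by (auto intro!: derivative_eq_intros)
  obtain \<xi> where \<xi>: "t < \<xi>" "\<xi> < T" "\<phi> T - \<phi> t = (f' \<xi> - d - m * (\<xi> - t)) * (T - t)"
    using mvt_dom[OF dphi t0 tT TR] by auto
  have "f' \<xi> - d - m * (\<xi> - t) \<le> 0" using chord[of \<xi>] \<xi> TL by simp
  hence "\<phi> T \<le> 0" using \<xi> tT by (simp add: \<phi>_def mult_nonpos_nonneg)
  hence E: "f T - f t - d * \<sigma> \<le> m * \<sigma>^2 / 2" unfolding \<phi>_def using Ts by simp
  have "f' L < - K" using inS[of L] L0R Ll by simp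
  hence "m < a / (L - t)" unfolding m_def a_def using tLpos by (simp add: divide_strict_right_mono)
  also have "a / (L - t) = a * a / H" using apos by (simp add: L_def)
  finally have mlt: "m * \<sigma>^2 < a * a / H * \<sigma>^2" using spos by (intro mult_strict_right_mono) auto
  have "(1 + \<theta>) * a \<le> (1 - \<theta>) * (a + K)"
  proof -
    have "\<theta> * (2 * a + K) \<le> \<theta> * (2 - K)" using theta a1 by (intro mult_left_mono) auto
    thus ?thesis using th2 by (simp add: algebra_simps)
  qed
  hence "(1 + \<theta>) * a * g / (a + K) \<le> (1 - \<theta>) * (a + K) * g / (a + K)"
    using gH aK by (intro divide_right_mono mult_right_mono) auto
  moreover have "(1 - \<theta>) * (a + K) * g / (a + K) = (1 - \<theta>) * g" using aK by simp
  moreover have "a * \<sigma> = (1 + \<theta>) * a * g / (a + K)" by (simp add: \<sigma>_def)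
  ultimately have asig: "a * \<sigma> \<le> (1 - \<theta>) * g" by simp
  have "(a * \<sigma>)^2 \<le> ((1 - \<theta>) * g)^2" using asig apos spos by (intro power_mono) auto
  also have "\<dots> = (1 - \<theta>)^2 * g * g" by (simp add: power2_eq_square)
  also have "\<dots> \<le> (1 - \<theta>)^2 * g * H" using gH by (intro mult_left_mono) auto
  finally have "(a * \<sigma>)^2 / H \<le> (1 - \<theta>)^2 * g" using gH by (simp add: divide_le_eq)
  moreover have "a * a / H * \<sigma>^2 = (a * \<sigma>)^2 / H" by (simp add: power2_eq_square)
  ultimately have "m * \<sigma>^2 < (1 - \<theta>)^2 * g" using mlt by linarith
  hence fin: "f T + (\<epsilon> + 2 * \<theta> * g) < ((1 + \<theta>^2) / 2) * g"
    using E dsig g_def by (simp add: power2_eq_square algebra_simps)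
  have "(T, \<epsilon> + 2 * \<theta> * g) \<in> Omega f f' R"
    unfolding Omega_def lam'_def[symmetric] K_def[symmetric] using T0 Tl e0 e2 eT pos by auto
  thus ?thesis using tT e2 fin unfolding T_def g_def by simp
qed

end
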